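(* Let $\mathrm{N}_1 = \mathrm{nM}([2,4,5,6,8,8])$. Then $\mathrm{N}_1(k) = \mathrm{N}(k)$ for all $k \in \mathbb{N} \setminus \{2^m - m + 1 : m \in \mathbb{N}, m \ge 3\}$, while for $k = 2^m - m + 1$ with $m \in \mathbb{N}$, $m \ge 3$, we have $\mathrm{N}_1(k) = \mathrm{N}(k) - 1 = 2^m$.
   Context: $\mathrm{N} : \mathbb{N} \to \mathbb{N}$ is defined by $\mathrm{N}(1) = 2$ and $\mathrm{N}(k) = \max_{i \in \{2,\dots,k\}} \min(2i, \mathrm{N}(k-i+1)+i)$ for $k \ge 2$. $[2,4,5,6,8,8]$ denotes the function $f : \mathbb{N} \to \mathbb{N} \cup \{+\infty\}$ with $(f(1),\dots,f(6)) = (2,4,5,6,8,8)$ and $f(k) = +\infty$ for $k \ge 7$. For $g : \mathbb{N} \to \mathbb{N} \cup \{+\infty\}$ and $k \ge 2$, $m \ge 4$, $\mathrm{pdp}_g(k,m)$ is the set of pairs $(e_0,e_1) \in \mathbb{N}^2$ with (i) $e_0,e_1 \ge 2$; (ii) $e_0,e_1 \le k$; (iii) $e_0+e_1 = m$; (iv) $e_0 \le e_1$; (v) $g(k-e_\varepsilon+1)+e_\varepsilon \ge m$ for both $\varepsilon \in \{0,1\}$. For $f$ with $f(1) = 2$, $f' = \mathrm{nM}(f)$ is defined by $f'(1) = 2$ and, for $k > 1$, $f'(k) = \min(m, f(k))$ where $m$ is the largest integer in $\{4,\dots,2k\}$ with $\mathrm{pdp}_{f'}(k,m) \ne \emptyset$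 (this uses only $f'(k')$ for $k' < k$). *)

theory Defs
  imports Main "HOL-Library.Extended_Nat"
begin

text \<open>The function N: N(1) = 2 and N(k) = max over i in {2..k} of min(2i, N(k-i+1)+i).
  Only arguments k >= 1 are meaningful (the value at 0 is an artifact).\<close>
function Nfun :: "nat \<Rightarrow> nat" where
  "Nfun k = (if k \<le> 1 then 2
             else Max ((\<lambda>i. min (2 * i) (Nfun (k - i + 1) + i)) ` {2..k}))"
  by pat_completeness auto
termination
  by (relation "measure id") auto

definition f_init :: "nat \<Rightarrow> enat" where
  "f_init k = (if 1 \<le> k \<and> k \<le> 6 then enat ([2,4,5,6,8,8] ! (k - 1)) else \<infinity>)"

definition pdp :: "(nat \<Rightarrow> enat) \<Rightarrow> nat \<Rightarrow> nat \<Rightarrow> (nat \<times> nat) set" where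
  "pdp g k m = {(e0, e1). 2 \<le> e0 \<and> 2 \<le> e1 \<and> e0 \<le> k \<and> e1 \<le> k \<and> e0 + e1 = m \<and> e0 \<le> e1
       \<and> g (k - e0 + 1) + enat e0 \<ge> enat m \<and> g (k - e1 + 1) + enat e1 \<ge> enat m}"

text \<open>nM(f): f'(1) = 2 and for k > 1, f'(k) = min(m, f(k)) with m the largest integer in
  {4..2k} such that pdp_{f'}(k,m) is nonempty. pdp_{f'}(k,m) only consults f'(j) for j < k,
  so we pass f' restricted to arguments below k (values at j >= k are never used).\<close>
function nM :: "(nat \<Rightarrow> enat) \<Rightarrow> nat \<Rightarrow> enat" where
  "nM f k = (if k \<le> 1 then 2
             else min (enat (GREATEST m. 4 \<le> m \<and> m \<le> 2 * k \<and>
                         pdp (\<lambda>j. if j < k then nM f j else \<infinity>) k m \<noteq> {}))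
                      (f k))"
  by pat_completeness auto
termination
  by (relation "measure snd") auto

end

theory Submission imports Defs begin

declare Nfun.simps[simp del] nM.simps[simp del]

definition p :: "nat \<Rightarrow> nat" where "p M = 2^M - M"

lemma pM: "p M + M = 2^M"
  using less_exp[of M] unfolding p_def by simp

lemma pSuc: "p (Suc M) + Suc M = 2 * 2^M"
  using pM[of "Suc M"] by simp

lemma p_mono: "M \<le> M' \<Longrightarrow> p M \<le> p M'"
proof (induction M' rule: dec_induct)
  case base then show ?case by simp
next
  case (step n)
  have "1 \<le> (2::nat)^n" by simp
  then show ?case using step pM[of n] pSuc[of n] by linarith
qed

lemma p_strict: "1 \<le> M \<Longrightarrow> p M < p (Suc M)"
proof -
  assume "1 \<le> M"
  then have "2 \<le> (2::nat)^M" by (metis one_le_numeral power_increasing power_one_right)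
  then show ?thesis using pM[of M] pSuc[of M] by linarith
qed

definition blk :: "nat \<Rightarrow> nat \<Rightarrow> bool" where
  "blk j M = (1 \<le> M \<and> p M \<le> j \<and> j < p (Suc M))"

lemma blk_lt: "blk j M' \<Longrightarrow> j < p M \<Longrightarrow> M' < M"
  unfolding blk_def using p_mono[of M M'] by (meson leI le_trans not_le)

lemma blk_ge: "blk j M' \<Longrightarrow> p M \<le> j \<Longrightarrow> M \<le> M'"
  unfolding blk_def using p_mono[of "Suc M'" M] by (meson leI le_trans not_less_eq_eq not_le)

lemma blk_unique: "blk j M \<Longrightarrow> blk j M' \<Longrightarrow> M = M'"
  using blk_ge[of j M M'] blk_ge[of j M' M] unfolding blk_def by simp

lemma blk_ex: "1 \<le> k \<Longrightarrow> \<exists>M. blk k M"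
proof (induction k rule: dec_induct)
  case base
  have "blk 1 1" unfolding blk_def p_def by simp
  then show ?case by blast
next
  case (step n)
  then obtain M where M: "blk n M" by blast
  show ?case
  proof (cases "Suc n < p (Suc M)")
    case True then show ?thesis using M unfolding blk_def by auto
  next
    case False
    then have "Suc n = p (Suc M)" using M unfolding blk_def by simp
    then have "blk (Suc n) (Suc M)" using p_strict[of "Suc M"] unfolding blk_def by simp
    then show ?thesis by blast
  qed
qed

lemma two_le_pow: "1 \<le> M \<Longrightarrow> 2 * M \<le> (2::nat)^M"
proof (induction M rule: dec_induct)
  case base then show ?case by simp
next
  case (step n)
  have "1 \<le> (2::nat)^n" by simp
  then show ?case using step by simp
qed

lemma Nfun_blk: "blk k M \<Longrightarrow> Nfun k = k + M"
proof (induction k arbitrary: M rule: less_induct)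
  case (less k)
  have M1: "1 \<le> M" "p M \<le> k" "k < p (Suc M)" using less.prems unfolding blk_def by auto
  have k1: "1 \<le> k" using M1 p_mono[of 1 M] by (simp add: p_def)
  show ?case
  proof (cases "k = 1")
    case True
    then have "blk k 1" unfolding blk_def p_def by simp
    then have "M = 1" using blk_unique less.prems by blast
    then show ?thesis using True by (subst Nfun.simps) simp
  next
    case False
    then have k2: "2 \<le> k" using k1 by simp
    have "M \<noteq> 1" proof
      assume "M = 1" then show False using M1 k2 by (simp add: p_def)
    qed
    then obtain M1 where MS: "M = Suc M1" and M11: "1 \<le> M1" using M1 by (cases M) auto
    have pw: "(2::nat)^M = 2 * 2^M1" using MS by simp
    have e1: "p M + M = 2^M" by (rule pM)
    have e2: "p (Suc M) + Suc M = 2 * 2^M" by (rule pSuc)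
    have e3: "p M1 + M1 = 2^M1" by (rule pM)
    have t2: "2 * M1 \<le> 2^M1" using two_le_pow M11 by blast
    have Mk: "M \<le> k" using e1 pw e3 t2 M1 MS M11 by linarith
    define F where "F = (\<lambda>i. min (2 * i) (Nfun (k - i + 1) + i))"
    have Nk: "Nfun k = Max (F ` {2..k})"
      using k2 by (subst Nfun.simps) (simp add: F_def)
    have ub: "F i \<le> k + M" if i: "i \<in> {2..k}" for i
    proof (cases "2 * i \<le> k + M")
      case True then show ?thesis by (simp add: F_def)
    next
      case False
      define j where "j = k - i + 1"
      have j1: "1 \<le> j" "j < k" using i by (auto simp: j_def)
      obtain Mj where Mj: "blk j Mj" using blk_ex j1 by blast
      have Nj: "Nfun j = j + Mj" using less.IH[OF j1(2) Mj] .
      have "2 * j \<le> k + 1 - M" using False i unfolding j_def by auto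
      then have "2 * j + M \<le> k + 1" using Mk by linarith
      then have "j < p M" using e1 e2 M1 by linarith
      then have "Mj < M" using blk_lt Mj by blast
      then show ?thesis using Nj i unfolding F_def j_def by auto
    qed
    define i where "i = (k + M + 1) div 2"
    have i2: "i \<in> {2..k}" using k2 MS Mk unfolding i_def by auto
    define j where "j = k - i + 1"
    have j1: "1 \<le> j" "j < k" using i2 by (auto simp: j_def)
    obtain Mj where Mj: "blk j Mj" using blk_ex j1 by blast
    have Nj: "Nfun j = j + Mj" using less.IH[OF j1(2) Mj] .
    have "2 * j \<ge> k + 1 - M" using i2 unfolding i_def j_def by auto
    then have "p M1 \<le> j" using e1 pw e3 M1 MS by linarith
    then have "M1 \<le> Mj" using blk_ge Mj by blast
    then have "F i \<ge> k + M" using Nj i2 MS unfolding F_def j_def i_def by auto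
    then have "F i = k + M" using ub[OF i2] by simp
    then have mem: "k + M \<in> F ` {2..k}" using i2 by (metis image_eqI)
    have "Max (F ` {2..k}) = k + M"
      using ub mem by (intro Max_eqI) auto
    then show ?thesis using Nk by simp
  qed
qed

definition val :: "nat \<Rightarrow> nat \<Rightarrow> nat" where
  "val k M = (if 3 \<le> M \<and> k = p M + 1 then k + M - 1 else k + M)"

lemma val_le: "val j M \<le> j + M" unfolding val_def by auto
lemma val_ge: "j + M \<le> val j M + 1" unfolding val_def by auto
lemma val_eq: "\<not> (3 \<le> M \<and> j = p M + 1) \<Longrightarrow> val j M = j + M" unfolding val_def by auto
lemma val_exc: "3 \<le> M \<Longrightarrow> j = p M + 1 \<Longrightarrow> val j M = j + M - 1" unfolding val_def by auto

lemma blk_p: "1 \<le> M \<Longrightarrow> blk (p M) M"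
  unfolding blk_def using p_strict by auto

lemma exc_one:
  assumes M13: "3 \<le> M1" and k: "k = p (Suc M1) + 1" and m: "k + Suc M1 \<le> m"
    and e: "e \<le> k" and b: "blk (k - e + 1) Mj" and c: "m \<le> val (k - e + 1) Mj + e"
  shows "(k - e + 1 = p M1 \<and> val (k - e + 1) Mj = p M1 + M1) \<or> p M1 + 2 \<le> k - e + 1"
proof -
  define j where "j = k - e + 1"
  have je: "j + e = k + 1" using e unfolding j_def by simp
  have "val j Mj \<le> j + Mj" by (rule val_le)
  then have MjM1: "M1 \<le> Mj" using c m je unfolding j_def by linarith
  have e3: "p M1 + M1 = 2^M1" by (rule pM)
  have e4: "p (Suc M1) + Suc M1 = 2 * 2^M1" by (rule pSuc)
  have t2: "2 * M1 \<le> 2^M1" using two_le_pow M13 by simp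
  have pp: "p M1 + 2 \<le> p (Suc M1)" using e3 e4 t2 M13 by linarith
  show ?thesis
  proof (cases "Mj = M1")
    case False
    then have "Suc M1 \<le> Mj" using MjM1 by simp
    then have "p (Suc M1) \<le> j" using b p_mono[of "Suc M1" Mj] unfolding blk_def j_def by simp
    then show ?thesis using pp unfolding j_def by simp
  next
    case True
    then have j1: "p M1 \<le> j" using b unfolding blk_def j_def by simp
    have "j \<noteq> p M1 + 1"
    proof
      assume "j = p M1 + 1"
      then have "val j Mj = j + M1 - 1" using val_exc M13 True by simp
      then show False using c m je unfolding j_def by linarith
    qed
    moreover have "j = p M1 \<Longrightarrow> val j Mj = p M1 + M1" using val_eq True by simp
    ultimately show ?thesis using j1 unfolding j_def by fastforce
  qed
qed

lemma exc_ub: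
  assumes M13: "3 \<le> M1" and k: "k = p (Suc M1) + 1" and m: "k + Suc M1 \<le> m"
    and s: "e0 + e1 = m" and e0: "e0 \<le> k" and e1: "e1 \<le> k"
    and b0: "blk (k - e0 + 1) M0" and c0: "m \<le> val (k - e0 + 1) M0 + e0"
    and b1: "blk (k - e1 + 1) Mb" and c1: "m \<le> val (k - e1 + 1) Mb + e1"
  shows False
proof -
  have d0: "(k - e0 + 1 = p M1 \<and> val (k - e0 + 1) M0 = p M1 + M1) \<or> p M1 + 2 \<le> k - e0 + 1"
    by (rule exc_one[OF M13 k m e0 b0 c0])
  have d1: "(k - e1 + 1 = p M1 \<and> val (k - e1 + 1) Mb = p M1 + M1) \<or> p M1 + 2 \<le> k - e1 + 1"
    by (rule exc_one[OF M13 k m e1 b1 c1])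
  have e3: "p M1 + M1 = 2^M1" by (rule pM)
  have e4: "p (Suc M1) + Suc M1 = 2 * 2^M1" by (rule pSuc)
  show False using d0 d1 e3 e4 k m s e0 e1 c0 by linarith
qed

lemma nexc_ub:
  assumes b: "blk k M" and m: "k + M + 1 \<le> m"
    and s: "e0 + e1 = m" and le: "e0 \<le> e1" and e1: "e1 \<le> k"
    and b1: "blk (k - e1 + 1) Mb" and c1: "m \<le> val (k - e1 + 1) Mb + e1"
  shows False
proof -
  define j where "j = k - e1 + 1"
  have je: "j + e1 = k + 1" using e1 unfolding j_def by simp
  have "val j Mb \<le> j + Mb" by (rule val_le)
  then have "M \<le> Mb" using c1 m je unfolding j_def by linarith
  then have "p M \<le> j" using b1 p_mono[of M Mb] unfolding blk_def j_def by simp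
  moreover have "p M + M = 2^M" by (rule pM)
  moreover have "p (Suc M) + Suc M = 2 * 2^M" by (rule pSuc)
  ultimately show False using b je s le m unfolding blk_def by linarith
qed

lemma feas:
  assumes b: "blk k M" and k2: "2 \<le> k"
  shows "\<exists>e0 e1. 2 \<le> e0 \<and> 2 \<le> e1 \<and> e0 \<le> k \<and> e1 \<le> k \<and> e0 + e1 = val k M \<and> e0 \<le> e1
     \<and> (\<forall>Mj. blk (k - e0 + 1) Mj \<longrightarrow> val k M \<le> val (k - e0 + 1) Mj + e0)
     \<and> (\<forall>Mj. blk (k - e1 + 1) Mj \<longrightarrow> val k M \<le> val (k - e1 + 1) Mj + e1)"
proof -
  have M1: "1 \<le> M" "p M \<le> k" "k < p (Suc M)" using b unfolding blk_def by auto
  have "M \<noteq> 1" proof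
    assume "M = 1" then show False using M1 k2 by (simp add: p_def)
  qed
  then obtain M1 where MS: "M = Suc M1" and M11: "1 \<le> M1" using M1 by (cases M) auto
  have pw: "(2::nat)^M = 2 * 2^M1" using MS by simp
  have e1: "p M + M = 2^M" by (rule pM)
  have e3: "p M1 + M1 = 2^M1" by (rule pM)
  have t2: "2 * M1 \<le> 2^M1" using two_le_pow M11 by blast
  show ?thesis
  proof (cases "3 \<le> M \<and> k = p M + 1")
    case True
    then have v: "val k M = k + M - 1" by (simp add: val_def)
    define e where "e = (2::nat)^M1"
    have j: "k - e + 1 = p M1 + 1" using True e1 e3 pw MS unfolding e_def by simp
    have c: "val k M \<le> val (k - e + 1) Mj + e" if bj: "blk (k - e + 1) Mj" for Mj
    proof -
      have "M1 \<le> Mj" using blk_ge[OF bj] j by simp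
      then show ?thesis using val_ge[of "k - e + 1" Mj] v j e1 e3 pw MS True unfolding e_def by linarith
    qed
    have "2 \<le> e" using M11 unfolding e_def
      by (metis one_le_numeral power_increasing power_one_right)
    moreover have "e \<le> k" using True e1 e3 pw MS t2 unfolding e_def by linarith
    moreover have "e + e = val k M" using v True e1 pw MS unfolding e_def by linarith
    ultimately show ?thesis using c by blast
  next
    case False
    then have v: "val k M = k + M" by (simp add: val_def)
    define e0 where "e0 = (2::nat)^M1"
    define e1' where "e1' = k + 1 - p M1"
    have pM11: "1 \<le> p M1" using p_mono[OF M11] by (simp add: p_def)
    have j1: "k - e1' + 1 = p M1" using M1 e1 e3 pw MS t2 unfolding e1'_def by linarith
    have c1: "val k M \<le> val (k - e1' + 1) Mj + e1'" if bj: "blk (k - e1' + 1) Mj" for Mj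
    proof -
      have "Mj = M1" using blk_unique[OF bj] blk_p[OF M11] j1 by simp
      then have "val (k - e1' + 1) Mj = p M1 + M1" using j1 val_eq by simp
      then show ?thesis using v j1 e1 e3 pw MS M1 t2 unfolding e1'_def by linarith
    qed
    have j0: "p M1 \<le> k - e0 + 1" "k - e0 + 1 + e0 = k + 1" using M1 e1 e3 pw MS t2 unfolding e0_def by linarith+
    have c0: "val k M \<le> val (k - e0 + 1) Mj + e0" if bj: "blk (k - e0 + 1) Mj" for Mj
    proof -
      have ge: "M1 \<le> Mj" using blk_ge[OF bj j0(1)] .
      show ?thesis
      proof (cases "Mj = M1")
        case False
        then show ?thesis using ge val_ge[of "k - e0 + 1" Mj] v j0 MS by linarith
      next
        case True
        have "\<not> (3 \<le> Mj \<and> k - e0 + 1 = p Mj + 1)"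
        proof
          assume a: "3 \<le> Mj \<and> k - e0 + 1 = p Mj + 1"
          have a2: "k - e0 + 1 = p M1 + 1" using a True by simp
          have "k = p M + 1" using a2 j0 e1 e3 pw MS unfolding e0_def by linarith
          moreover have "3 \<le> M" using a True MS by simp
          ultimately have "3 \<le> M \<and> k = p M + 1" by simp
          then show False using False by simp
        qed
        then have "val (k - e0 + 1) Mj = k - e0 + 1 + Mj" by (rule val_eq)
        then show ?thesis using True v j0 MS by linarith
      qed
    qed
    have "2 \<le> e0" using M11 unfolding e0_def
      by (metis one_le_numeral power_increasing power_one_right)
    moreover have "e0 \<le> e1'" "e1' \<le> k" "2 \<le> e1'" "e0 \<le> k" "e0 + e1' = val k M"
      using M1 e1 e3 pw MS t2 pM11 v M11 unfolding e0_def e1'_def by linarith+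
    ultimately show ?thesis using c0 c1 by blast
  qed
qed

lemma blk_small: "blk 2 2" "blk 3 2" "blk 4 2" "blk 5 3" "blk 6 3"
  unfolding blk_def p_def by auto

lemma finit_small: "2 \<le> k \<Longrightarrow> k \<le> 6 \<Longrightarrow> blk k M \<Longrightarrow> f_init k = enat (val k M)"
proof -
  assume a: "2 \<le> k" "k \<le> 6" "blk k M"
  then have "k = 2 \<or> k = 3 \<or> k = 4 \<or> k = 5 \<or> k = 6" by auto
  then show ?thesis
  proof (elim disjE)
    assume "k = 2" then have "M = 2" using a blk_unique blk_small by blast
    then show ?thesis using \<open>k = 2\<close> by (simp add: f_init_def val_def)
  next
    assume "k = 3" then have "M = 2" using a blk_unique blk_small by blast
    then show ?thesis using \<open>k = 3\<close> by (simp add: f_init_def val_def)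
  next
    assume "k = 4" then have "M = 2" using a blk_unique blk_small by blast
    then show ?thesis using \<open>k = 4\<close> by (simp add: f_init_def val_def)
  next
    assume "k = 5" then have "M = 3" using a blk_unique blk_small by blast
    then show ?thesis using \<open>k = 5\<close> by (simp add: f_init_def val_def p_def)
  next
    assume "k = 6" then have "M = 3" using a blk_unique blk_small by blast
    then show ?thesis using \<open>k = 6\<close> by (simp add: f_init_def val_def p_def)
  qed
qed

lemma nM_blk: "blk k M \<Longrightarrow> nM f_init k = enat (val k M)"
proof (induction k arbitrary: M rule: less_induct)
  case (less k)
  have M1: "1 \<le> M" "p M \<le> k" "k < p (Suc M)" using less.prems unfolding blk_def by auto
  have k1: "1 \<le> k" using M1 p_mono[of 1 M] by (simp add: p_def)
  show ?case
  proof (cases "k = 1")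
    case True
    then have "blk k 1" unfolding blk_def p_def by simp
    then have "M = 1" using blk_unique less.prems by blast
    then show ?thesis using True by (subst nM.simps) (simp add: val_def p_def numeral_eq_enat)
  next
    case False
    then have k2: "2 \<le> k" using k1 by simp
    define g where "g = (\<lambda>j. if j < k then nM f_init j else \<infinity>)"
    define P where "P = (\<lambda>m. 4 \<le> m \<and> m \<le> 2 * k \<and> pdp g k m \<noteq> {})"
    have nk: "nM f_init k = min (enat (Greatest P)) (f_init k)"
      using k2 by (subst nM.simps) (simp add: g_def P_def)
    have gv: "g (k - e + 1) = enat (val (k - e + 1) Mj)"
      if "2 \<le> e" "e \<le> k" "blk (k - e + 1) Mj" for e Mj
    proof -
      have "k - e + 1 < k" using that by simp
      then show ?thesis using less.IH[OF _ that(3)] unfolding g_def by simp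
    qed
    have bnd: "\<And>y. P y \<Longrightarrow> y \<le> 2 * k" unfolding P_def by simp
    obtain e0 e1 where E: "2 \<le> e0" "2 \<le> e1" "e0 \<le> k" "e1 \<le> k" "e0 + e1 = val k M" "e0 \<le> e1"
      "\<forall>Mj. blk (k - e0 + 1) Mj \<longrightarrow> val k M \<le> val (k - e0 + 1) Mj + e0"
      "\<forall>Mj. blk (k - e1 + 1) Mj \<longrightarrow> val k M \<le> val (k - e1 + 1) Mj + e1"
      using feas[OF less.prems k2] by blast
    obtain M0 where M0: "blk (k - e0 + 1) M0" using blk_ex by (metis le_add2)
    obtain Mb where Mb: "blk (k - e1 + 1) Mb" using blk_ex by (metis le_add2)
    have "(e0, e1) \<in> pdp g k (val k M)"
      unfolding pdp_def using E M0 Mb gv[OF E(1) E(3) M0] gv[OF E(2) E(4) Mb] by simp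
    then have Pv: "P (val k M)" unfolding P_def using E by auto
    have Gge: "val k M \<le> Greatest P" by (rule Greatest_le_nat[where P=P, OF Pv bnd])
    show ?thesis
    proof (cases "k \<le> 6")
      case True
      then have "f_init k = enat (val k M)" using finit_small k2 less.prems by blast
      then show ?thesis using nk Gge by (simp add: min_def)
    next
      case False
      then have fi: "f_init k = \<infinity>" unfolding f_init_def by simp
      have ub: "y \<le> val k M" if Py: "P y" for y
      proof (rule ccontr)
        assume "\<not> y \<le> val k M"
        then have yv: "val k M + 1 \<le> y" by simp
        from Py obtain a b where ab: "(a, b) \<in> pdp g k y" unfolding P_def by auto
        then have A: "2 \<le> a" "2 \<le> b" "a \<le> k" "b \<le> k" "a + b = y" "a \<le> b"
          "enat y \<le> g (k - a + 1) + enat a" "enat y \<le> g (k - b + 1) + enat b"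
          unfolding pdp_def by auto
        obtain Ma where Ma: "blk (k - a + 1) Ma" using blk_ex by (metis le_add2)
        obtain Mc where Mc: "blk (k - b + 1) Mc" using blk_ex by (metis le_add2)
        have ca: "y \<le> val (k - a + 1) Ma + a" using A(7) gv[OF A(1) A(3) Ma] by simp
        have cb: "y \<le> val (k - b + 1) Mc + b" using A(8) gv[OF A(2) A(4) Mc] by simp
        show False
        proof (cases "3 \<le> M \<and> k = p M + 1")
          case True
          have "M \<noteq> 3" proof
            assume "M = 3" then show False using True False by (simp add: p_def)
          qed
          then obtain M1 where MS: "M = Suc M1" and M13: "3 \<le> M1" using True by (cases M) auto
          have "val k M = k + M - 1" using True by (simp add: val_def)
          then have "k + Suc M1 \<le> y" using yv MS by simp
          then show False using exc_ub[OF M13 _ _ A(5) A(3) A(4) Ma ca Mc cb] True MS by simp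
        next
          case nf: False
          then have "val k M = k + M" by (simp add: val_def)
          then show False using nexc_ub[OF less.prems _ A(5) A(6) A(4) Mc cb] yv by simp
        qed
      qed
      have "Greatest P = val k M" by (rule Greatest_equality[where P=P, OF Pv ub])
      then show ?thesis using nk fi by simp
    qed
  qed
qed

theorem theorem14p7:
  shows "(\<forall>k::nat. 1 \<le> k \<longrightarrow> k \<notin> {2 ^ m - m + 1 | m::nat. 3 \<le> m} \<longrightarrow>
            nM f_init k = enat (Nfun k)) \<and>
         (\<forall>m::nat. 3 \<le> m \<longrightarrow>
            nM f_init (2 ^ m - m + 1) = enat (Nfun (2 ^ m - m + 1) - 1) \<and>
            nM f_init (2 ^ m - m + 1) = enat (2 ^ m))"
proof (intro conjI allI impI)
  fix k :: nat
  assume k1: "1 \<le> k" and nk: "k \<notin> {2 ^ m - m + 1 | m::nat. 3 \<le> m}"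
  obtain M where b: "blk k M" using blk_ex[OF k1] by blast
  have "\<not> (3 \<le> M \<and> k = p M + 1)" using nk unfolding p_def by blast
  then have "val k M = k + M" by (rule val_eq)
  then show "nM f_init k = enat (Nfun k)" using nM_blk[OF b] Nfun_blk[OF b] by simp
next
  fix m :: nat
  assume m3: "3 \<le> m"
  have k: "2 ^ m - m + 1 = p m + 1" unfolding p_def by simp
  have e1: "p m + m = 2^m" by (rule pM)
  have e2: "p (Suc m) + Suc m = 2 * 2^m" by (rule pSuc)
  have t: "2 * m \<le> 2^m" using two_le_pow m3 by simp
  have b: "blk (p m + 1) m" unfolding blk_def using m3 e1 e2 t by linarith
  have v: "val (p m + 1) m = 2^m" using val_exc[OF m3] e1 m3 by simp
  show "nM f_init (2 ^ m - m + 1) = enat (Nfun (2 ^ m - m + 1) - 1)"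
    using nM_blk[OF b] Nfun_blk[OF b] v e1 k by simp
  show "nM f_init (2 ^ m - m + 1) = enat (2 ^ m)"
    using nM_blk[OF b] v k by simp
qed

end
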